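(* In the setting described in the context, the optimal value of \[ O(\mathbf y)=\min_{\tilde{\mathbf y}\in\{-1,1\}^n}\ \frac12\sum_{i=1}^n(1-y_i\tilde y_i)\quad\text{s.t.}\quad \operatorname{sign}(\hat p_t)\sum_{i=1}^n\tilde y_iQ_t^i<0 \] equals $k'=\min\{k\in\{1,\dots,n\}: P_k>S/2\}$, and this set is nonempty. Moreover, flipping exactly the labels of the training points indexed by $a_{(1)},\dots,a_{(k')}$ is an optimal solution.
   Context: Let $n\ge1$, let $Q_t^1,\dots,Q_t^n\in\mathbb R$, and let $\mathbf y\in\{-1,1\}^n$. Put $\hat p_t=\sum_{i=1}^n y_iQ_t^i$ and assume $\hat p_t\ne0$. Define $a_i=\operatorname{sign}(\hat p_t)\,y_iQ_t^i$ for $i\in[n]$ and $S=\sum_{i=1}^n a_i$, so that $S=|\hat p_t|>0$. Let $a_{(1)}\ge a_{(2)}\ge\dots\ge a_{(n)}$ be the $a_i$ sorted in nonincreasing order, and let $P_k=\sum_{j=1}^k a_{(j)}$. The quantity $\frac12\sum_i(1-y_i\tilde y_i)$ is the number of indices $i$ with $\tilde y_i\neq y_i$. *)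

theory Defs
  imports Complex_Main "HOL-Library.FuncSet"
begin

text \<open>Training points are indexed by {1..n}; labels and queries are functions on nat.\<close>

definition phat :: "nat \<Rightarrow> (nat \<Rightarrow> real) \<Rightarrow> (nat \<Rightarrow> real) \<Rightarrow> real" where
  "phat n Q y = (\<Sum>i=1..n. y i * Q i)"

definition acoef :: "nat \<Rightarrow> (nat \<Rightarrow> real) \<Rightarrow> (nat \<Rightarrow> real) \<Rightarrow> nat \<Rightarrow> real" where
  "acoef n Q y i = sgn (phat n Q y) * y i * Q i"

definition flipcost :: "nat \<Rightarrow> (nat \<Rightarrow> real) \<Rightarrow> (nat \<Rightarrow> real) \<Rightarrow> real" where
  "flipcost n y yt = (1/2) * (\<Sum>i=1..n. (1 - y i * yt i))"

definition feasible :: "nat \<Rightarrow> (nat \<Rightarrow> real) \<Rightarrow> (nat \<Rightarrow> real) \<Rightarrow> (nat \<Rightarrow> real) set" where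
  "feasible n Q y = {yt \<in> {1..n} \<rightarrow>\<^sub>E {-1, 1}.
      sgn (phat n Q y) * (\<Sum>i=1..n. yt i * Q i) < 0}"

definition Opt :: "nat \<Rightarrow> (nat \<Rightarrow> real) \<Rightarrow> (nat \<Rightarrow> real) \<Rightarrow> real" where
  "Opt n Q y = Min (flipcost n y ` feasible n Q y)"

text \<open>Partial sums P_k of the sorted a-values, sorting given by the permutation sigma:
  a_(j) = a (sigma j).\<close>
definition Psum :: "nat \<Rightarrow> (nat \<Rightarrow> real) \<Rightarrow> (nat \<Rightarrow> real) \<Rightarrow> (nat \<Rightarrow> nat) \<Rightarrow> nat \<Rightarrow> real" where
  "Psum n Q y \<sigma> k = (\<Sum>j=1..k. acoef n Q y (\<sigma> j))"

end

theory Submission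
  imports Defs
begin

lemma topsum:
  fixes a :: "nat \<Rightarrow> real" and \<sigma> :: "nat \<Rightarrow> nat"
  assumes hperm: "bij_betw \<sigma> {1..n} {1..n}"
    and hsorted: "\<forall>j\<in>{1..n}. \<forall>l\<in>{1..n}. j \<le> l \<longrightarrow> a (\<sigma> l) \<le> a (\<sigma> j)"
    and F: "F \<subseteq> {1..n}"
  shows "sum a F \<le> (\<Sum>j=1..card F. a (\<sigma> j))"
proof -
  define m where "m = card F"
  have finF: "finite F" using F finite_subset by blast
  have mn: "m \<le> n" unfolding m_def using card_mono[OF _ F] by simp
  show ?thesis
  proof (cases "m = 0")
    case True
    then have "F = {}" using finF m_def by simp
    then show ?thesis by simp
  next
    case False
    define G where "G = \<sigma> ` {1..m}"
    define t where "t = a (\<sigma> m)"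
    have injm: "inj_on \<sigma> {1..m}"
      using hperm mn by (meson bij_betw_def inj_on_subset atLeastatMost_subset_iff order_refl)
    have sG: "(\<Sum>j=1..m. a (\<sigma> j)) = sum a G"
      unfolding G_def using sum.reindex[OF injm, of a] by simp
    have cG: "card G = m" unfolding G_def using card_image[OF injm] by simp
    have finG: "finite G" unfolding G_def by simp
    have Gsub: "G \<subseteq> {1..n}" unfolding G_def using hperm mn
      by (auto simp: bij_betw_def)
    have ge: "\<And>x. x \<in> G \<Longrightarrow> t \<le> a x"
      unfolding G_def t_def using hsorted mn False by auto
    have le: "\<And>x. x \<in> F - G \<Longrightarrow> a x \<le> t"
    proof -
      fix x assume x: "x \<in> F - G"
      then have "x \<in> {1..n}" using F by auto
      then obtain l where l: "l \<in> {1..n}" "x = \<sigma> l" using hperm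
        by (metis bij_betw_imp_surj_on imageE)
      have "l \<notin> {1..m}" using x l unfolding G_def by auto
      then have "m \<le> l" using l by auto
      then show "a x \<le> t" unfolding t_def using hsorted l mn False by auto
    qed
    have s1: "sum a F = sum a (F - G) + sum a (F \<inter> G)"
      using finF by (metis Diff_Int2 Int_commute inf.idem sum.Int_Diff add.commute)
    have s2: "sum a G = sum a (G - F) + sum a (F \<inter> G)"
      using finG by (metis Int_commute sum.Int_Diff add.commute)
    have b1: "sum a (F - G) \<le> of_nat (card (F - G)) * t"
      using sum_bounded_above[of "F - G" a t] le by auto
    have b2: "of_nat (card (G - F)) * t \<le> sum a (G - F)"
      using sum_bounded_below[of "G - F" t a] ge by auto
    have c1: "card (F - G) = m - card (F \<inter> G)"
      using card_Diff_subset_Int[of G F] finF m_def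
      by (metis card_Diff_subset_Int Int_commute finite_Int)
    have c2: "card (G - F) = m - card (F \<inter> G)"
      using cG finG card_Diff_subset_Int[of G F] by (simp add: Int_commute)
    show ?thesis using s1 s2 b1 b2 c1 c2 sG m_def by simp
  qed
qed


theorem mainTheorem7:
  fixes n :: nat and Q y :: "nat \<Rightarrow> real" and \<sigma> :: "nat \<Rightarrow> nat"
  assumes hn: "n \<ge> 1"
    and hy: "\<forall>i\<in>{1..n}. y i \<in> {-1, 1}"
    and hp: "phat n Q y \<noteq> 0"
    and hperm: "bij_betw \<sigma> {1..n} {1..n}"
    and hsorted: "\<forall>j\<in>{1..n}. \<forall>l\<in>{1..n}. j \<le> l \<longrightarrow> acoef n Q y (\<sigma> l) \<le> acoef n Q y (\<sigma> j)"
  shows "let S = (\<Sum>i=1..n. acoef n Q y i);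
             K = {k \<in> {1..n}. Psum n Q y \<sigma> k > S / 2};
             k' = (LEAST k. k \<in> K);
             ystar = restrict (\<lambda>i. if i \<in> \<sigma> ` {1..k'} then - y i else y i) {1..n}
         in K \<noteq> {} \<and> Opt n Q y = real k' \<and>
            ystar \<in> feasible n Q y \<and> flipcost n y ystar = Opt n Q y"
proof -
  define s where "s = sgn (phat n Q y)"
  define a where "a = acoef n Q y"
  define S where "S = (\<Sum>i=1..n. a i)"
  define K where "K = {k \<in> {1..n}. Psum n Q y \<sigma> k > S / 2}"
  define k' where "k' = (LEAST k. k \<in> K)"
  define yF where "yF = (\<lambda>F. restrict (\<lambda>i. if i \<in> F then - y i else y i) {1..n})"
  have ss: "s * s = 1" using hp unfolding s_def by (simp add: sgn_if)
  have Spos: "S = \<bar>phat n Q y\<bar>"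
  proof -
    have "S = s * phat n Q y" unfolding S_def a_def acoef_def phat_def s_def
      by (simp add: sum_distrib_left mult.assoc)
    also have "\<dots> = \<bar>phat n Q y\<bar>" unfolding s_def by (simp add: sgn_if)
    finally show ?thesis .
  qed
  have S0: "S > 0" using Spos hp by simp
  have Ps: "\<And>k. Psum n Q y \<sigma> k = (\<Sum>j=1..k. a (\<sigma> j))" unfolding Psum_def a_def by simp
  have sorted': "\<forall>j\<in>{1..n}. \<forall>l\<in>{1..n}. j \<le> l \<longrightarrow> a (\<sigma> l) \<le> a (\<sigma> j)"
    using hsorted unfolding a_def by simp
  have PsF: "\<And>k. k \<le> n \<Longrightarrow> Psum n Q y \<sigma> k = sum a (\<sigma> ` {1..k})"
  proof -
    fix k assume k: "k \<le> n"
    have "inj_on \<sigma> {1..k}" using hperm k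
      by (meson bij_betw_def inj_on_subset atLeastatMost_subset_iff order_refl)
    then show "Psum n Q y \<sigma> k = sum a (\<sigma> ` {1..k})" using Ps sum.reindex by (simp add: sum.reindex)
  qed
  have sumF: "\<And>F. F \<subseteq> {1..n} \<Longrightarrow> s * (\<Sum>i=1..n. yF F i * Q i) = S - 2 * sum a F"
  proof -
    fix F assume F: "F \<subseteq> {1..n}"
    have "s * (\<Sum>i=1..n. yF F i * Q i) = (\<Sum>i=1..n. a i - 2 * (if i \<in> F then a i else 0))"
      unfolding sum_distrib_left
      by (rule sum.cong) (auto simp: yF_def a_def acoef_def s_def algebra_simps)
    also have "\<dots> = S - 2 * (\<Sum>i=1..n. (if i \<in> F then a i else 0))"
      unfolding S_def by (simp add: sum_subtractf sum_distrib_left)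
    also have "(\<Sum>i=1..n. (if i \<in> F then a i else 0)) = sum a F"
      using F by (simp add: sum.inter_restrict[symmetric] Int_absorb1)
    finally show "s * (\<Sum>i=1..n. yF F i * Q i) = S - 2 * sum a F" .
  qed
  have costF: "\<And>F. F \<subseteq> {1..n} \<Longrightarrow> flipcost n y (yF F) = real (card F)"
  proof -
    fix F assume F: "F \<subseteq> {1..n}"
    have "(\<Sum>i=1..n. (1 - y i * yF F i)) = (\<Sum>i=1..n. (if i \<in> F then 2 else 0))"
    proof (rule sum.cong)
      fix i assume i: "i \<in> {1..n}"
      then have "y i = -1 \<or> y i = 1" using hy by auto
      then have "y i * y i = 1" by auto
      then show "1 - y i * yF F i = (if i \<in> F then 2 else 0)" using i unfolding yF_def by auto
    qed simp
    also have "\<dots> = 2 * real (card F)"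
      using F by (simp add: sum.If_cases Int_absorb1)
    finally show "flipcost n y (yF F) = real (card F)" unfolding flipcost_def by simp
  qed
  have feasF: "\<And>F. F \<subseteq> {1..n} \<Longrightarrow> yF F \<in> feasible n Q y \<longleftrightarrow> sum a F > S / 2"
  proof -
    fix F assume F: "F \<subseteq> {1..n}"
    have "yF F \<in> {1..n} \<rightarrow>\<^sub>E {-1, 1}" unfolding yF_def using hy by fastforce
    then show "yF F \<in> feasible n Q y \<longleftrightarrow> sum a F > S / 2"
      unfolding feasible_def using sumF[OF F] s_def by auto
  qed
  have allF: "\<And>yt. yt \<in> feasible n Q y \<Longrightarrow> yt = yF {i \<in> {1..n}. yt i \<noteq> y i}"
  proof -
    fix yt assume "yt \<in> feasible n Q y"
    then have yt: "yt \<in> {1..n} \<rightarrow>\<^sub>E {-1, 1}" unfolding feasible_def by auto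
    show "yt = yF {i \<in> {1..n}. yt i \<noteq> y i}"
    proof
      fix i show "yt i = yF {i \<in> {1..n}. yt i \<noteq> y i} i"
      proof (cases "i \<in> {1..n}")
        case True
        then have "yt i = -1 \<or> yt i = 1" "y i = -1 \<or> y i = 1" using yt hy by auto
        then show ?thesis using True unfolding yF_def by auto
      next
        case False then show ?thesis using yt unfolding yF_def by auto
      qed
    qed
  qed
  have nK: "n \<in> K" unfolding K_def using hn S0 PsF[of n] hperm
    by (simp add: bij_betw_def S_def)
  then have Kne: "K \<noteq> {}" by auto
  have k'K: "k' \<in> K" unfolding k'_def using nK by (rule LeastI)
  have k'min: "\<And>k. k \<in> K \<Longrightarrow> k' \<le> k" unfolding k'_def by (rule Least_le)
  have k'n: "k' \<le> n" "1 \<le> k'" using k'K unfolding K_def by auto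
  define G where "G = \<sigma> ` {1..k'}"
  have Gsub: "G \<subseteq> {1..n}" unfolding G_def using hperm k'n by (auto simp: bij_betw_def)
  have cG: "card G = k'" unfolding G_def
  proof -
    have "inj_on \<sigma> {1..k'}" using hperm k'n
      by (meson bij_betw_def inj_on_subset atLeastatMost_subset_iff order_refl)
    then show "card (\<sigma> ` {1..k'}) = k'" by (simp add: card_image)
  qed
  have Gfeas: "yF G \<in> feasible n Q y"
    using feasF[OF Gsub] k'K PsF[OF k'n(1)] unfolding K_def G_def by auto
  have Gcost: "flipcost n y (yF G) = real k'" using costF[OF Gsub] cG by simp
  have lower: "\<And>yt. yt \<in> feasible n Q y \<Longrightarrow> real k' \<le> flipcost n y yt"
  proof -
    fix yt assume yt: "yt \<in> feasible n Q y"
    define F where "F = {i \<in> {1..n}. yt i \<noteq> y i}"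
    have F: "F \<subseteq> {1..n}" unfolding F_def by auto
    have e: "yt = yF F" using allF[OF yt] unfolding F_def .
    have "sum a F > S / 2" using feasF[OF F] yt e by simp
    moreover have "sum a F \<le> Psum n Q y \<sigma> (card F)"
      using topsum[OF hperm sorted' F] Ps by simp
    moreover have "card F \<le> n" using card_mono[OF _ F] by simp
    moreover have "card F \<ge> 1"
    proof (rule ccontr)
      assume "\<not> card F \<ge> 1"
      moreover have "finite F" using F finite_subset by blast
      moreover have "card F = 0" using \<open>\<not> card F \<ge> 1\<close> by simp
      ultimately have "F = {}" by simp
      then show False using \<open>sum a F > S / 2\<close> S0 by simp
    qed
    ultimately have "card F \<in> K" unfolding K_def by auto
    then have "k' \<le> card F" by (rule k'min)
    then show "real k' \<le> flipcost n y yt" using costF[OF F] e by simp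
  qed
  have finfeas: "finite (feasible n Q y)"
  proof (rule finite_subset)
    show "feasible n Q y \<subseteq> {1..n} \<rightarrow>\<^sub>E {-1, 1::real}" unfolding feasible_def by auto
    show "finite ({1..n} \<rightarrow>\<^sub>E {-1, 1::real})" by (rule finite_PiE) auto
  qed
  have Opt: "Opt n Q y = real k'"
    unfolding Opt_def
  proof (rule antisym)
    show "Min (flipcost n y ` feasible n Q y) \<le> real k'"
      using Gfeas Gcost finfeas by (metis Min_le finite_imageI image_eqI)
    show "real k' \<le> Min (flipcost n y ` feasible n Q y)"
      using Gfeas finfeas lower by (subst Min_ge_iff) auto
  qed
  have eqS: "(\<Sum>i=1..n. acoef n Q y i) = S" by (simp add: S_def a_def)
  have yFG: "restrict (\<lambda>i. if i \<in> G then - y i else y i) {1..n} = yF G" by (simp add: yF_def)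
  show ?thesis
    unfolding Let_def eqS K_def[symmetric] k'_def[symmetric] G_def[symmetric] yFG
    using Kne Opt Gfeas Gcost by simp
qed

end
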